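(* Let $q>3$ be odd and $u=\begin{pmatrix}1&1\\0&1\end{pmatrix}$. Then the conjugacy class of $u$ in $\mathbf{GL}_2(q)$ is of type D.
   Context: Conjugacy classes are racks with $x\triangleright y=xyx^{-1}$. A subrack $Y$ is decomposable if $Y=R\sqcup S$ with nonempty subracks $R,S$, $Y\triangleright R=R$, $Y\triangleright S=S$. Type D: a decomposable subrack $R\sqcup S$ with $r\in R,s\in S$ and $r\triangleright(s\triangleright(r\triangleright s))\neq s$. *)

theory Defs
  imports "HOL-Analysis.Analysis"
begin

text \<open>Abstract rack notions, relative to a binary operation op (x |> y = op x y)
  on an ambient set X.\<close>

definition subrack :: "('x \<Rightarrow> 'x \<Rightarrow> 'x) \<Rightarrow> 'x set \<Rightarrow> 'x set \<Rightarrow> bool" where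
  "subrack op X Y \<longleftrightarrow> Y \<subseteq> X \<and> (\<forall>a\<in>Y. \<forall>b\<in>Y. op a b \<in> Y)"

definition rack_act_set :: "('x \<Rightarrow> 'x \<Rightarrow> 'x) \<Rightarrow> 'x set \<Rightarrow> 'x set \<Rightarrow> 'x set" where
  "rack_act_set op Y R = {op y r | y r. y \<in> Y \<and> r \<in> R}"

definition decomposition :: "('x \<Rightarrow> 'x \<Rightarrow> 'x) \<Rightarrow> 'x set \<Rightarrow> 'x set \<Rightarrow> 'x set \<Rightarrow> 'x set \<Rightarrow> bool" where
  "decomposition op X Y R S \<longleftrightarrow>
     subrack op X Y \<and> subrack op X R \<and> subrack op X S \<and>
     R \<noteq> {} \<and> S \<noteq> {} \<and> Y = R \<union> S \<and> R \<inter> S = {} \<and>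
     rack_act_set op Y R = R \<and> rack_act_set op Y S = S"

definition type_D :: "('x \<Rightarrow> 'x \<Rightarrow> 'x) \<Rightarrow> 'x set \<Rightarrow> bool" where
  "type_D op X \<longleftrightarrow> (\<exists>Y R S. decomposition op X Y R S \<and>
     (\<exists>r\<in>R. \<exists>s\<in>S. op r (op s (op r s)) \<noteq> s))"

definition GL2 :: "('a::field ^2^2) set" where
  "GL2 = {g. invertible g}"

definition conj2 :: "'a::field ^2^2 \<Rightarrow> 'a^2^2 \<Rightarrow> 'a^2^2" where
  "conj2 x y = x ** y ** matrix_inv x"

definition conj_class2 :: "'a::field ^2^2 \<Rightarrow> ('a^2^2) set" where
  "conj_class2 h = {conj2 g h | g. g \<in> GL2}"

definition unip :: "'a::field ^2^2" where
  "unip = (\<chi> i j. if i = j \<or> (i = 1 \<and> j = 2) then 1 else 0)"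

end

theory Submission
  imports Defs "HOL-Number_Theory.Residues"
begin

definition mk :: "'a::field \<Rightarrow> 'a \<Rightarrow> 'a \<Rightarrow> 'a \<Rightarrow> 'a^2^2" where
  "mk a b c d = (\<chi> i j. if i = 1 then (if j = 1 then a else b) else (if j = 1 then c else d))"

lemma mk_nth[simp]: "mk a b c d $ 1 $ 1 = a" "mk a b c d $ 1 $ 2 = b"
  "mk a b c d $ 2 $ 1 = c" "mk a b c d $ 2 $ 2 = d"
  by (simp_all add: mk_def)

lemma mk_eq_iff: "mk a b c d = mk e f g h \<longleftrightarrow> a=e \<and> b=f \<and> c=g \<and> d=h"
  by (metis mk_nth)

lemma mk_eta: "(A::'a::field^2^2) = mk (A$1$1) (A$1$2) (A$2$1) (A$2$2)"
  by (simp add: vec_eq_iff forall_2)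

lemma mk_mult: "mk a b c d ** mk e f g h = mk (a*e+b*g) (a*f+b*h) (c*e+d*g) (c*f+d*h)"
  by (simp add: vec_eq_iff forall_2 matrix_matrix_mult_def sum_2)

lemma mk_det: "det (mk a b c d) = a*d - b*c"
  by (simp add: det_2)

lemma mat1_mk: "(mat 1 :: 'a::field^2^2) = mk 1 0 0 1"
  by (simp add: vec_eq_iff forall_2 mat_def)

lemma unip_mk: "(unip :: 'a::field^2^2) = mk 1 1 0 1"
  by (simp add: vec_eq_iff forall_2 unip_def)


lemma inv_unique:
  fixes A B :: "'a::field^2^2"
  assumes "A ** B = mat 1" "B ** A = mat 1"
  shows "matrix_inv A = B"
proof -
  have "\<exists>B'. A ** B' = mat 1 \<and> B' ** A = mat 1" using assms by blast
  hence h: "A ** matrix_inv A = mat 1 \<and> matrix_inv A ** A = mat 1"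
    unfolding matrix_inv_def by (rule someI_ex)
  have "matrix_inv A = matrix_inv A ** (A ** B)" using assms by (simp add: matrix_mul_rid)
  also have "\<dots> = (matrix_inv A ** A) ** B" by (simp add: matrix_mul_assoc)
  also have "\<dots> = B" using h by (simp add: matrix_mul_lid)
  finally show ?thesis .
qed

lemma inv_props:
  fixes A :: "'a::field^2^2"
  assumes "invertible A"
  shows "A ** matrix_inv A = mat 1" "matrix_inv A ** A = mat 1"
proof -
  have "\<exists>B'. A ** B' = mat 1 \<and> B' ** A = mat 1" using assms by (simp add: invertible_def)
  hence h: "A ** matrix_inv A = mat 1 \<and> matrix_inv A ** A = mat 1"
    unfolding matrix_inv_def by (rule someI_ex)
  thus "A ** matrix_inv A = mat 1" "matrix_inv A ** A = mat 1" by auto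
qed

lemma inv_mk1:
  fixes a b c d :: "'a::field"
  assumes "a*d - b*c = 1"
  shows "matrix_inv (mk a b c d) = mk d (-b) (-c) a"
  apply (rule inv_unique)
  subgoal using assms by (simp add: mk_mult mat1_mk mk_eq_iff algebra_simps)
  subgoal using assms by (simp add: mk_mult mat1_mk mk_eq_iff algebra_simps)
  done

lemma inv_diag:
  fixes l :: "'a::field"
  assumes "l \<noteq> 0"
  shows "matrix_inv (mk l 0 0 1) = mk (1/l) 0 0 1"
  apply (rule inv_unique)
  using assms by (simp_all add: mk_mult mat1_mk mk_eq_iff)

lemma conj_transv:
  fixes a b c d e :: "'a::field"
  assumes "a*d - b*c = 1"
  shows "conj2 (mk a b c d) (mk 1 e 0 1) = mk (1 - e*a*c) (e*a*a) (-e*c*c) (1+e*a*c)"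
proof -
  have "conj2 (mk a b c d) (mk 1 e 0 1) = mk a b c d ** mk 1 e 0 1 ** mk d (-b) (-c) a"
    unfolding conj2_def using inv_mk1[OF assms] by simp
  also have "\<dots> = mk (1 - e*a*c) (e*a*a) (-e*c*c) (1+e*a*c)"
    proof -
      have "mk a b c d ** mk 1 e 0 1 ** mk d (-b) (-c) a = mk ((a*d-b*c) - e*a*c) (e*a*a) (-e*c*c) ((a*d-b*c) + e*a*c)"
        by (simp add: mk_mult mk_eq_iff algebra_simps)
      thus ?thesis using assms by simp
    qed
  finally show ?thesis .
qed



lemma typeD_calc:
  fixes a m :: "'a::field"
  assumes "a \<noteq> 0" "m \<noteq> 0" "a*m + 2 \<noteq> 0"
  shows "conj2 (mk 1 a 0 1) (conj2 (mk 1 0 m 1) (conj2 (mk 1 a 0 1) (mk 1 0 m 1))) \<noteq> mk 1 0 m 1"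
proof
  assume "conj2 (mk 1 a 0 1) (conj2 (mk 1 0 m 1) (conj2 (mk 1 a 0 1) (mk 1 0 m 1))) = mk 1 0 m 1"
  hence "a * (a * (m * (m * m))) + a * (m * (m * (2::'a))) = 0"
    unfolding conj2_def inv_mk1[of 1 1 a 0, simplified] inv_mk1[of 1 1 0 m, simplified] mk_mult
    by (simp add: mk_eq_iff algebra_simps)
  hence "(a*m*m) * (a*m+2) = 0" by (simp add: algebra_simps)
  thus False using assms by simp
qed

lemma conj_comp:
  fixes a b x :: "'a::field^2^2"
  assumes "invertible a" "invertible b"
  shows "conj2 a (conj2 b x) = conj2 (a ** b) x"
proof -
  have "matrix_inv (a ** b) = matrix_inv b ** matrix_inv a"
  proof (rule inv_unique)
    show "a ** b ** (matrix_inv b ** matrix_inv a) = mat 1"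
      by (metis assms inv_props matrix_mul_assoc matrix_mul_rid)
    show "matrix_inv b ** matrix_inv a ** (a ** b) = mat 1"
      by (metis assms inv_props matrix_mul_assoc matrix_mul_lid)
  qed
  thus ?thesis unfolding conj2_def by (simp add: matrix_mul_assoc)
qed

lemma det_conj:
  fixes h x :: "'a::field^2^2"
  assumes "invertible h"
  shows "det (conj2 h x) = det x"
proof -
  have "det h * det (matrix_inv h) = 1"
    using inv_props(1)[OF assms] det_mul[of h "matrix_inv h"] by simp
  thus ?thesis unfolding conj2_def det_mul by (simp add: algebra_simps)
qed

lemma conj_self:
  fixes x :: "'a::field^2^2"
  assumes "invertible x"
  shows "conj2 x x = x"
  unfolding conj2_def using inv_props(1)[OF assms]
  by (metis matrix_mul_assoc matrix_mul_rid)

lemma inv_one: "matrix_inv (mat 1 :: 'a::field^2^2) = mat 1"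
  by (rule inv_unique) (simp_all add: matrix_mul_lid)

lemma det1_inv: "det (h::'a::field^2^2) = 1 \<Longrightarrow> invertible h"
  by (simp add: invertible_det_nz)

definition Porb :: "'a::field^2^2 \<Rightarrow> ('a^2^2) set" where
  "Porb x0 = {conj2 h x0 | h. det h = 1}"

lemma Porb_act:
  assumes "det y = 1" "x \<in> Porb x0"
  shows "conj2 y x \<in> Porb x0"
proof -
  obtain h where h: "det h = 1" "x = conj2 h x0" using assms(2) unfolding Porb_def by blast
  have "conj2 y x = conj2 (y ** h) x0" using h assms(1) by (simp add: conj_comp det1_inv)
  moreover have "det (y ** h) = 1" using h assms(1) by (simp add: det_mul)
  ultimately show ?thesis unfolding Porb_def by blast
qed

lemma Porb_det:
  assumes "det x0 = 1" "x \<in> Porb x0"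
  shows "det x = 1"
  using assms unfolding Porb_def by (auto simp: det_conj det1_inv)

lemma Porb_self: "x0 \<in> Porb x0"
  unfolding Porb_def conj2_def
  by (rule CollectI, rule exI[of _ "mat 1"]) (simp add: inv_one matrix_mul_lid matrix_mul_rid)

lemma decomp_generic:
  fixes x0 x1 :: "'a::field^2^2"
  assumes d0: "det x0 = 1" and d1: "det x1 = 1"
    and disj: "Porb x0 \<inter> Porb x1 = {}"
    and sub0: "Porb x0 \<subseteq> X" and sub1: "Porb x1 \<subseteq> X"
  shows "decomposition conj2 X (Porb x0 \<union> Porb x1) (Porb x0) (Porb x1)"
proof -
  let ?Y = "Porb x0 \<union> Porb x1"
  have detY: "det y = 1" if "y \<in> ?Y" for y using that Porb_det d0 d1 by blast
  have act: "conj2 y x \<in> Porb z" if "y \<in> ?Y" "x \<in> Porb z" for y x z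
    using Porb_act detY that by blast
  have ras: "rack_act_set conj2 ?Y (Porb z) = Porb z" if "Porb z \<subseteq> ?Y" for z
  proof
    show "rack_act_set conj2 ?Y (Porb z) \<subseteq> Porb z"
      unfolding rack_act_set_def using act by blast
    show "Porb z \<subseteq> rack_act_set conj2 ?Y (Porb z)"
    proof
      fix r assume r: "r \<in> Porb z"
      hence "r \<in> ?Y" using that by blast
      moreover have "conj2 r r = r" using detY[OF \<open>r \<in> ?Y\<close>] by (simp add: conj_self det1_inv)
      ultimately show "r \<in> rack_act_set conj2 ?Y (Porb z)"
        unfolding rack_act_set_def using r by force
    qed
  qed
  show ?thesis
    unfolding decomposition_def subrack_def
    using sub0 sub1 disj act ras Porb_self by blast
qed

lemma two_ne0:
  assumes "odd CARD('a::{field,finite})"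
  shows "(2::'a) \<noteq> 0"
proof
  assume h: "(2::'a) = 0"
  have c2: "CHAR('a) dvd 2" using h of_nat_eq_0_iff_char_dvd[of 2, where 'a='a] by simp
  have cc: "CHAR('a) dvd CARD('a)" by (rule CHAR_dvd_CARD)
  have "odd CHAR('a)" using cc assms dvd_trans by blast
  hence "CHAR('a) = 1" using c2
    by (metis dvd_refl even_numeral nat_dvd_1_iff_1 prime_nat_iff two_is_prime_nat)
  hence "(of_nat 1 :: 'a) = 0" by (metis of_nat_CHAR)
  thus False by simp
qed

lemma nonsq:
  assumes "(2::'a::{field,finite}) \<noteq> 0"
  shows "\<exists>l::'a. \<forall>t. t*t \<noteq> l"
proof (rule ccontr)
  assume "\<not> ?thesis"
  hence "surj (\<lambda>t::'a. t*t)" by (metis surjI)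
  hence "inj (\<lambda>t::'a. t*t)" by (simp add: finite_UNIV_surj_inj)
  moreover have "(1::'a) \<noteq> -1"
  proof
    assume "(1::'a) = -1" hence "(1::'a) + 1 = 0" by (metis add.right_inverse)
    thus False using assms by simp
  qed
  ultimately show False by (metis (no_types) injD mult_minus_left mult_minus_right minus_minus mult_1_left)
qed

theorem mainTheorem11:
  assumes "odd CARD('a::{field,finite})" and "CARD('a) > 3"
  shows "type_D (conj2 :: 'a^2^2 \<Rightarrow> _) (conj_class2 (unip :: 'a^2^2))"
proof -
  have two: "(2::'a) \<noteq> 0" using two_ne0 assms(1) by blast
  obtain l :: 'a where l: "\<And>t. t*t \<noteq> l" using nonsq[OF two] by blast
  have l0: "l \<noteq> 0" using l[of 0] by simp
  obtain t :: 'a where t: "t \<notin> {0,1,-1}"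
  proof -
    have "card (set [0,1,-1::'a]) \<le> 3" using card_length[of "[0,1,-1::'a]"] by simp
    hence "\<not> UNIV \<subseteq> set [0,1,-1::'a]" using assms(2)
      by (metis card_mono finite_set not_le order.trans)
    thus ?thesis using that by auto
  qed
  have tt: "t*t \<noteq> 1"
  proof
    assume "t*t = 1" hence "(t-1)*(t+1) = 0" by (simp add: algebra_simps)
    thus False using t by (auto simp: add_eq_0_iff minus_equation_iff)
  qed
  obtain t0 :: 'a where t0: "t0 \<noteq> 0" "t0*t0*l \<noteq> 2"
  proof (cases "l = 2")
    case True
    have "t*t*l \<noteq> 2" using True tt two by simp
    thus ?thesis using that t by auto
  next
    case False thus ?thesis using that[of 1] by simp
  qed
  define a where "a = t0*t0"
  define s0 :: "'a^2^2" where "s0 = mk 1 l 0 1"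
  have U: "(unip::'a^2^2) = mk 1 1 0 1" by (rule unip_mk)
  have dU: "det (unip::'a^2^2) = 1" by (simp add: U mk_det)
  have ds0: "det s0 = 1" by (simp add: s0_def mk_det)
  have s0c: "s0 = conj2 (mk l 0 0 1) unip"
    unfolding conj2_def inv_diag[OF l0] U s0_def mk_mult using l0 by (simp add: mk_eq_iff)
  have invD: "invertible (mk l 0 0 (1::'a))" using l0 by (simp add: invertible_det_nz mk_det)
  have entries: "\<exists>p q. x $ 1 $ 2 = e * (p*p) \<and> x $ 2 $ 1 = - e * (q*q) \<and> (p \<noteq> 0 \<or> q \<noteq> 0)"
    if xP: "x \<in> Porb (mk 1 e 0 1)" for x and e :: 'a
  proof -
    obtain h where h: "det h = 1" "x = conj2 h (mk 1 e 0 1)" using xP unfolding Porb_def by blast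
    define p where "p = h$1$1"
    define q where "q = h$2$1"
    have hd: "p * h$2$2 - h$1$2 * q = 1" using h(1) mk_det[of p "h$1$2" q "h$2$2"] mk_eta[of h]
      by (simp add: p_def q_def)
    have "x = mk (1 - e*p*q) (e*p*p) (-e*q*q) (1+e*p*q)"
      using h(2) mk_eta[of h] conj_transv[OF hd, of e] by (simp add: p_def q_def)
    moreover have "p \<noteq> 0 \<or> q \<noteq> 0" using hd by auto
    ultimately show ?thesis by (intro exI[of _ p] exI[of _ q]) simp
  qed
  have disj: "Porb unip \<inter> Porb s0 = {}"
  proof (rule ccontr)
    assume "Porb unip \<inter> Porb s0 \<noteq> {}"
    then obtain x where x0: "x \<in> Porb (mk 1 1 0 1)" and x1: "x \<in> Porb (mk 1 l 0 1)"
      unfolding U s0_def by blast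
    obtain p q where pq: "x $ 1 $ 2 = 1 * (p*p)" "x $ 2 $ 1 = - 1 * (q*q)" using entries[OF x0] by blast
    obtain p' q' where pq': "x $ 1 $ 2 = l * (p'*p')" "x $ 2 $ 1 = - l * (q'*q')" "p' \<noteq> 0 \<or> q' \<noteq> 0"
      using entries[OF x1] by blast
    show False
    proof (cases "p' = 0")
      case False
      have "(p/p') * (p/p') = l" using pq(1) pq'(1) False by (simp add: field_simps)
      thus False using l by blast
    next
      case True
      hence "q' \<noteq> 0" using pq'(3) by simp
      have "(q/q') * (q/q') = l" using pq(2) pq'(2) \<open>q' \<noteq> 0\<close> by (simp add: field_simps)
      thus False using l by blast
    qed
  qed
  have sub0: "Porb unip \<subseteq> conj_class2 unip"
    unfolding Porb_def conj_class2_def GL2_def using det1_inv by blast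
  have sub1: "Porb s0 \<subseteq> conj_class2 unip"
  proof
    fix x assume "x \<in> Porb s0"
    then obtain h where h: "det h = 1" "x = conj2 h s0" unfolding Porb_def by blast
    hence "x = conj2 (h ** mk l 0 0 1) unip" using s0c invD by (simp add: conj_comp det1_inv)
    moreover have "invertible (h ** mk l 0 0 1)" using h invD by (simp add: invertible_mult det1_inv)
    ultimately show "x \<in> conj_class2 unip" unfolding conj_class2_def GL2_def by blast
  qed
  have dec: "decomposition conj2 (conj_class2 unip) (Porb unip \<union> Porb s0) (Porb unip) (Porb s0)"
    by (rule decomp_generic[OF dU ds0 disj sub0 sub1])
  have rR: "mk 1 a 0 1 \<in> Porb unip"
  proof -
    have "conj2 (mk t0 0 0 (1/t0)) (mk 1 1 0 1) = mk 1 a 0 1"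
      using conj_transv[of t0 "1/t0" 0 0 1] t0 by (simp add: a_def)
    moreover have "det (mk t0 0 0 (1/t0)) = 1" using t0 by (simp add: mk_det)
    ultimately show ?thesis unfolding Porb_def U by force
  qed
  have sS: "mk 1 0 (-l) 1 \<in> Porb s0"
  proof -
    have "conj2 (mk 0 1 (-1) 0) (mk 1 l 0 1) = mk 1 0 (-l) 1"
      using conj_transv[of 0 0 1 "-1" l] by simp
    moreover have "det (mk 0 1 (-1) (0::'a)) = 1" by (simp add: mk_det)
    ultimately show ?thesis unfolding Porb_def s0_def by force
  qed
  have "conj2 (mk 1 a 0 1) (conj2 (mk 1 0 (-l) 1) (conj2 (mk 1 a 0 1) (mk 1 0 (-l) 1))) \<noteq> mk 1 0 (-l) 1"
  proof (rule typeD_calc)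
    show "a \<noteq> 0" using t0 by (simp add: a_def)
    show "-l \<noteq> 0" using l0 by simp
    show "a * - l + 2 \<noteq> 0" using t0 by (simp add: a_def algebra_simps)
  qed
  thus ?thesis unfolding type_D_def using dec rR sS by blast
qed
end
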